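(* Let $M\subset\mathbf{R}^d$ be a smooth closed hypersurface bounding a compact convex domain with all principal curvatures positive, let $G:M\to\mathbf{S}^{d-1}$ be its Gauss map (outer unit normal) and $h(n)=\langle G^{-1}(n),n\rangle$ its support function. Represent each oriented line uniquely as $\{m+tn:t\in\mathbf{R}\}$ with $n\in\mathbf{S}^{d-1}$ and $m\perp n$, i.e. as $(m,n)\in T^*\mathbf{S}^{d-1}$ (identifying $T_n\mathbf{S}^{d-1}$ with $T_n^*\mathbf{S}^{d-1}$ via the Euclidean inner product). Define $F:\mathbf{S}^{d-1}\times\mathbf{S}^{d-1}\setminus\Delta\to\mathbf{R}$ by $$F(n_1,n_2)=\left\langle G^{-1}\!\left(\frac{n_1-n_2}{|n_1-n_2|}\right),\,n_1-n_2\right\rangle=h\!\left(\frac{n_1-n_2}{|n_1-n_2|}\right)|n_1-n_2|.$$ Then the billiard ball map $T$ inside $M$ satisfies $$T(m_1,n_1)=(m_2,n_2)\iff m_1=D_1F(n_1,n_2),\quad m_2=-D_2F(n_1,n_2),$$ where $D_iF$ is the differential of $F$ in the $i$-th variable. Moreover, the twist condition holds: the mixed second differentials $D_{12}=D_1\circ D_2: T_{n_1}\mathbf{S}^{d-1}\to T^*_{n_2}\mathbf{S}^{d-1}$ and $D_{21}=D_2\circ D_1:T_{n_2}\mathbf{S}^{d-1}\to T^*_{n_1}\mathbf{S}^{d-1}$ of $F$ are isomorphisms.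
   Context: The billiard ball map $T$ acts on oriented lines meeting $M$: an oriented line is reflected at its exit point from the convex domain according to the law of reflection in $M$, producing the next oriented line. $\Delta$ denotes the diagonal $\{n_1=n_2\}$. *)

theory Defs
  imports "HOL-Analysis.Analysis"
begin

coinductive smooth_on :: "'a::euclidean_space set \<Rightarrow> ('a \<Rightarrow> real) \<Rightarrow> bool" for U where
  "(\<exists>Df. (\<forall>x\<in>U. (f has_derivative Df x) (at x)) \<and> (\<forall>v. smooth_on U (\<lambda>x. Df x v)))
     \<Longrightarrow> smooth_on U f"

definition gradient :: "('a::euclidean_space \<Rightarrow> real) \<Rightarrow> 'a \<Rightarrow> 'a" where
  "gradient f x = (\<Sum>b\<in>Basis. frechet_derivative f (at x) b *\<^sub>R b)"

definition hessian :: "('a::euclidean_space \<Rightarrow> real) \<Rightarrow> 'a \<Rightarrow> 'a \<Rightarrow> 'a \<Rightarrow> real" where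
  "hessian f x v w = frechet_derivative (\<lambda>y. frechet_derivative f (at y) v) (at x) w"

text \<open>m (a vector orthogonal to n, i.e. an element of T_n S^{d-1}, identified with
  T^*_n S^{d-1} via the inner product) represents the differential at n of a function f
  defined on the unit sphere. Differentiability on the sphere is expressed through the
  0-homogeneous extension x \<mapsto> f (x / |x|), whose derivative at n is the differential
  of f on tangent vectors and vanishes in the normal direction.\<close>
definition sphere_grad :: "('a::euclidean_space \<Rightarrow> real) \<Rightarrow> 'a \<Rightarrow> 'a \<Rightarrow> bool" where
  "sphere_grad f n m \<longleftrightarrow> inner m n = 0 \<and>
     ((\<lambda>x. f (x /\<^sub>R norm x)) has_derivative (\<lambda>v. inner m v)) (at n)"

text \<open>The mixed second differential D_1(D_2 F) at (n1,n2), as a linear map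
  T_{n1} S^{d-1} \<rightarrow> T^*_{n2} S^{d-1} (= n2^\<bottom>), exists and is an isomorphism.\<close>
definition mixed_D12_iso :: "('a::euclidean_space \<Rightarrow> 'a \<Rightarrow> real) \<Rightarrow> 'a \<Rightarrow> 'a \<Rightarrow> bool" where
  "mixed_D12_iso F n1 n2 \<longleftrightarrow> (\<exists>g L.
     (\<forall>x\<in>sphere 0 1. x \<noteq> n2 \<longrightarrow> sphere_grad (\<lambda>y. F x y) n2 (g x)) \<and>
     ((\<lambda>x. g (x /\<^sub>R norm x)) has_derivative L) (at n1) \<and>
     bij_betw L {u. inner u n1 = 0} {w. inner w n2 = 0})"

text \<open>Billiard ball map as a relation on oriented lines (m,n) = {m + t n}:
  the line (m1,n1) leaves the convex body K at the point p = m1 + t n1 of M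
  (the last point of the line in K), the direction is reflected in the tangent hyperplane
  at p (unit normal N p), and (m2,n2) is the reflected line through p in normal form.\<close>
definition billiard_step :: "'a::euclidean_space set \<Rightarrow> 'a set \<Rightarrow> ('a \<Rightarrow> 'a)
    \<Rightarrow> 'a \<times> 'a \<Rightarrow> 'a \<times> 'a \<Rightarrow> bool" where
  "billiard_step K M N l1 l2 \<longleftrightarrow> (case l1 of (m1, n1) \<Rightarrow> case l2 of (m2, n2) \<Rightarrow>
     (\<exists>t. let p = m1 + t *\<^sub>R n1 in
        p \<in> M \<and> (\<forall>s>t. m1 + s *\<^sub>R n1 \<notin> K) \<and>
        n2 = n1 - (2 * inner n1 (N p)) *\<^sub>R N p \<and>
        m2 = p - inner p n2 *\<^sub>R n2))"

definition gauss_map :: "('a::euclidean_space \<Rightarrow> real) \<Rightarrow> 'a \<Rightarrow> 'a" where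
  "gauss_map \<phi> x = gradient \<phi> x /\<^sub>R norm (gradient \<phi> x)"

definition gen_fun :: "'a::euclidean_space set \<Rightarrow> ('a \<Rightarrow> 'a) \<Rightarrow> 'a \<Rightarrow> 'a \<Rightarrow> real" where
  "gen_fun M G n1 n2 = inner (inv_into M G ((n1 - n2) /\<^sub>R norm (n1 - n2))) (n1 - n2)"

end

theory Submission
  imports Defs
begin

lemma smooth_onD:
  assumes "smooth_on UNIV f"
  shows "\<forall>x. (f has_derivative frechet_derivative f (at x)) (at x)"
    "\<forall>v. smooth_on UNIV (\<lambda>x. frechet_derivative f (at x) v)"
proof -
  have "\<exists>Df. (\<forall>x\<in>UNIV. (f has_derivative Df x) (at x)) \<and> (\<forall>v. smooth_on UNIV (\<lambda>x. Df x v))"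
    using assms by (rule smooth_on.cases) simp
  then obtain Df where D1: "\<forall>x\<in>UNIV. (f has_derivative Df x) (at x)"
     and D2: "\<forall>v. smooth_on UNIV (\<lambda>x. Df x v)" by (elim exE conjE)
  have e: "Df = (\<lambda>x. frechet_derivative f (at x))"
  proof
    fix x show "Df x = frechet_derivative f (at x)" using D1 by (simp add: frechet_derivative_at)
  qed
  show "\<forall>x. (f has_derivative frechet_derivative f (at x)) (at x)" using D1 unfolding e by simp
  show "\<forall>v. smooth_on UNIV (\<lambda>x. frechet_derivative f (at x) v)" using D2 unfolding e .
qed

lemma linear_basis_expand:
  fixes f :: "'a::euclidean_space \<Rightarrow> real"
  assumes "linear f"
  shows "f w = (\<Sum>b\<in>Basis. (w \<bullet> b) * f b)"
proof -
  have "f w = f (\<Sum>b\<in>Basis. (w \<bullet> b) *\<^sub>R b)" by (simp add: euclidean_representation)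
  also have "\<dots> = (\<Sum>b\<in>Basis. (w \<bullet> b) * f b)"
    using assms by (simp add: linear_sum linear_scale)
  finally show ?thesis .
qed

locale bil =
  fixes \<phi> :: "'a::euclidean_space \<Rightarrow> real" and K M :: "'a set"
  assumes smooth: "smooth_on UNIV \<phi>"
    and K_def: "K = {x. \<phi> x \<le> 0}"
    and M_def: "M = {x. \<phi> x = 0}"
    and compact: "compact K" and convex: "convex K" and domain: "interior K \<noteq> {}"
    and regular: "\<forall>x\<in>M. gradient \<phi> x \<noteq> 0"
    and curvature: "\<forall>x\<in>M. \<forall>v. v \<noteq> 0 \<and> inner v (gradient \<phi> x) = 0 \<longrightarrow> hessian \<phi> x v v > 0"
begin

definition d1 where "d1 x = frechet_derivative \<phi> (at x)"
definition d2 where "d2 v x = frechet_derivative (\<lambda>y. d1 y v) (at x)"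
definition gr where "gr x = gradient \<phi> x"
definition Hm where "Hm x w = (\<Sum>b\<in>Basis. d2 b x w *\<^sub>R b)"

lemma d1_deriv: "(\<phi> has_derivative d1 x) (at x)"
  unfolding d1_def by (rule smooth_onD(1)[OF smooth, rule_format])

lemma sm1: "smooth_on UNIV (\<lambda>x. d1 x v)"
  unfolding d1_def by (rule smooth_onD(2)[OF smooth, rule_format])

lemma d2_deriv: "((\<lambda>y. d1 y v) has_derivative d2 v x) (at x)"
  unfolding d2_def by (rule smooth_onD(1)[OF sm1, rule_format])

lemma sm2: "smooth_on UNIV (\<lambda>x. d2 v x w)"
  unfolding d2_def by (rule smooth_onD(2)[OF sm1, rule_format])

lemma d2_cont: "continuous (at x) (\<lambda>y. d2 v y w)"
  using smooth_onD(1)[OF sm2, rule_format] by (rule has_derivative_continuous)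

lemma d1_linear: "linear (d1 x)"
  using d1_deriv has_derivative_linear by blast

lemma d2_linear: "linear (d2 v x)"
  using d2_deriv has_derivative_linear by blast

lemma phi_cont: "continuous (at x) \<phi>"
  using d1_deriv has_derivative_continuous by blast

lemma d1_cont: "continuous (at x) (\<lambda>y. d1 y v)"
  using d2_deriv has_derivative_continuous by blast

lemma gr_eq: "gr x = (\<Sum>b\<in>Basis. d1 x b *\<^sub>R b)"
  unfolding gr_def gradient_def d1_def by simp

lemma gr_inner: "gr x \<bullet> w = d1 x w"
proof -
  have "gr x \<bullet> w = (\<Sum>b\<in>Basis. d1 x b * (b \<bullet> w))"
    by (simp add: gr_eq inner_sum_left)
  also have "\<dots> = d1 x w" using linear_basis_expand[OF d1_linear, of x w]
    by (simp add: inner_commute mult.commute)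
  finally show ?thesis .
qed

lemma phi_deriv: "(\<phi> has_derivative (\<lambda>w. gr x \<bullet> w)) (at x)"
proof -
  have "d1 x = (\<lambda>w. gr x \<bullet> w)" using gr_inner by (simp add: fun_eq_iff)
  thus ?thesis using d1_deriv by metis
qed

lemma d2_lin1: "d2 v x w = (\<Sum>b\<in>Basis. (v \<bullet> b) * d2 b x w)"
proof -
  have eq: "(\<lambda>y. d1 y v) = (\<lambda>y. \<Sum>b\<in>Basis. (v \<bullet> b) * d1 y b)"
    by (intro ext) (rule linear_basis_expand[OF d1_linear])
  have "((\<lambda>y. \<Sum>b\<in>Basis. (v \<bullet> b) * d1 y b) has_derivative (\<lambda>w. \<Sum>b\<in>Basis. (v \<bullet> b) * d2 b x w)) (at x)"
    by (intro has_derivative_sum has_derivative_mult_right d2_deriv)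
  hence "((\<lambda>y. d1 y v) has_derivative (\<lambda>w. \<Sum>b\<in>Basis. (v \<bullet> b) * d2 b x w)) (at x)"
    using eq by simp
  from has_derivative_unique[OF d2_deriv this] show ?thesis by metis
qed

lemma Hm_inner: "Hm x w \<bullet> v = d2 v x w"
proof -
  have "Hm x w \<bullet> v = (\<Sum>b\<in>Basis. d2 b x w * (b \<bullet> v))"
    by (simp add: Hm_def inner_sum_left)
  also have "\<dots> = (\<Sum>b\<in>Basis. (v \<bullet> b) * d2 b x w)"
    by (rule sum.cong) (simp_all add: inner_commute)
  finally have "Hm x w \<bullet> v = (\<Sum>b\<in>Basis. (v \<bullet> b) * d2 b x w)" .
  thus ?thesis using d2_lin1[of v x w] by simp
qed

lemma hessian_eq: "hessian \<phi> x v w = d2 v x w"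
  unfolding hessian_def d2_def d1_def by simp

lemma gr_deriv: "(gr has_derivative Hm x) (at x)"
proof -
  have "((\<lambda>y. \<Sum>b\<in>Basis. d1 y b *\<^sub>R b) has_derivative (\<lambda>w. \<Sum>b\<in>Basis. d2 b x w *\<^sub>R b)) (at x)"
    by (intro has_derivative_sum has_derivative_scaleR_left d2_deriv)
  moreover have "gr = (\<lambda>y. \<Sum>b\<in>Basis. d1 y b *\<^sub>R b)" using gr_eq by (simp add: fun_eq_iff)
  ultimately show ?thesis unfolding Hm_def[abs_def] by simp
qed

lemma gr_cont: "continuous (at x) gr"
  using gr_deriv has_derivative_continuous by blast

lemma Hm_cont: "continuous (at x) (\<lambda>y. Hm y w)"
  unfolding Hm_def by (intro continuous_intros d2_cont)

lemma Hm_linear: "linear (Hm x)"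
  using gr_deriv has_derivative_linear by blast

end


lemma unit_inner_le: fixes a u :: "'a::real_inner"
  assumes "norm a = 1" "norm u = 1" shows "a \<bullet> u \<le> 1"
  using Cauchy_Schwarz_ineq2[of a u] assms by (simp add: abs_le_iff)

lemma unit_inner_eq: fixes a u :: "'a::real_inner"
  assumes "norm a = 1" "norm u = 1" "a \<bullet> u = 1" shows "a = u"
proof -
  have "norm (a - u)^2 = a \<bullet> a - 2 * (a \<bullet> u) + u \<bullet> u"
    by (simp add: power2_norm_eq_inner inner_diff_left inner_diff_right inner_commute)
  also have "\<dots> = 0" using assms by (simp add: dot_square_norm)
  finally show ?thesis by simp
qed

lemma unit_inner_lt: fixes a u :: "'a::real_inner"
  assumes "norm a = 1" "norm u = 1" "a \<noteq> u" shows "a \<bullet> u < 1"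
  using unit_inner_le[OF assms(1,2)] unit_inner_eq[OF assms(1,2)] assms(3) by fastforce

context bil begin

definition G where "G x = gauss_map \<phi> x"

lemma G_eq: "G x = gr x /\<^sub>R norm (gr x)"
  unfolding G_def gauss_map_def gr_def by simp

lemma K_iff: "x \<in> K \<longleftrightarrow> \<phi> x \<le> 0" using K_def by simp
lemma M_iff: "x \<in> M \<longleftrightarrow> \<phi> x = 0" using M_def by simp
lemma M_sub_K: "M \<subseteq> K" using K_iff M_iff by auto

lemma phi_cont_on: "continuous_on S \<phi>"
  using phi_cont by (simp add: continuous_at_imp_continuous_on)

lemma M_closed: "closed M"
proof -
  have "closed {x. \<phi> x = 0}"
    using continuous_closed_preimage_constant[OF phi_cont_on, of UNIV 0] by simp
  thus ?thesis using M_def by simp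
qed

lemma M_compact: "compact M"
  using compact_Int_closed[OF compact M_closed] M_sub_K by (simp add: Int_absorb1)

lemma path_deriv: "((\<lambda>t. \<phi> (x + t *\<^sub>R v)) has_real_derivative (gr (x + t0 *\<^sub>R v) \<bullet> v)) (at t0)"
proof -
  have l: "((\<lambda>t. x + t *\<^sub>R v) has_derivative (\<lambda>t. t *\<^sub>R v)) (at t0)"
    by (auto intro!: derivative_eq_intros)
  have "((\<lambda>t. \<phi> (x + t *\<^sub>R v)) has_derivative (\<lambda>t. gr (x + t0 *\<^sub>R v) \<bullet> (t *\<^sub>R v))) (at t0)"
    using has_derivative_compose[OF l phi_deriv] by (simp add: o_def)
  moreover have "(\<lambda>t. gr (x + t0 *\<^sub>R v) \<bullet> (t *\<^sub>R v)) = (*) (gr (x + t0 *\<^sub>R v) \<bullet> v)"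
    by (simp add: fun_eq_iff)
  ultimately show ?thesis unfolding has_field_derivative_def by simp
qed

lemma path_deriv2: "((\<lambda>t. gr (x + t *\<^sub>R v) \<bullet> v) has_real_derivative (d2 v (x + t0 *\<^sub>R v) v)) (at t0)"
proof -
  have l: "((\<lambda>t. x + t *\<^sub>R v) has_derivative (\<lambda>t. t *\<^sub>R v)) (at t0)"
    by (auto intro!: derivative_eq_intros)
  have "((\<lambda>t. d1 (x + t *\<^sub>R v) v) has_derivative (\<lambda>t. d2 v (x + t0 *\<^sub>R v) (t *\<^sub>R v))) (at t0)"
    using has_derivative_compose[OF l d2_deriv] by (simp add: o_def)
  moreover have "(\<lambda>t. d2 v (x + t0 *\<^sub>R v) (t *\<^sub>R v)) = (*) (d2 v (x + t0 *\<^sub>R v) v)"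
    using d2_linear by (simp add: fun_eq_iff linear_scale)
  ultimately show ?thesis unfolding has_field_derivative_def gr_inner by simp
qed

lemma segment_in_K: assumes "x \<in> K" "y \<in> K" "0 \<le> h" "h \<le> 1"
  shows "x + h *\<^sub>R (y - x) \<in> K"
proof -
  have "(1 - h) *\<^sub>R x + h *\<^sub>R y \<in> K" using convexD_alt[OF convex assms(1,2)] assms(3,4) by simp
  moreover have "(1 - h) *\<^sub>R x + h *\<^sub>R y = x + h *\<^sub>R (y - x)" by (simp add: algebra_simps)
  ultimately show ?thesis by simp
qed

lemma support: assumes "x \<in> M" "y \<in> K" shows "gr x \<bullet> (y - x) \<le> 0"
proof (rule ccontr)
  assume "\<not> ?thesis"
  hence pos: "0 < gr x \<bullet> (y - x)" by simp
  have "((\<lambda>t. \<phi> (x + t *\<^sub>R (y - x))) has_real_derivative (gr x \<bullet> (y - x))) (at 0)"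
    using path_deriv[of x "y - x" 0] by simp
  from DERIV_pos_inc_right[OF this pos] obtain d where d: "d > 0"
    "\<And>h. h > 0 \<Longrightarrow> h < d \<Longrightarrow> \<phi> (x + 0 *\<^sub>R (y - x)) < \<phi> (x + (0 + h) *\<^sub>R (y - x))" by blast
  define h where "h = min (d/2) 1"
  have h: "h > 0" "h < d" "h \<le> 1" using d(1) by (auto simp: h_def)
  have "\<phi> x < \<phi> (x + h *\<^sub>R (y - x))" using d(2)[OF h(1,2)] by simp
  moreover have "x + h *\<^sub>R (y - x) \<in> K" using segment_in_K[of x y h] assms M_sub_K h by auto
  ultimately show False using assms(1) M_iff K_iff by fastforce
qed

lemma gr_M_nz: "x \<in> M \<Longrightarrow> gr x \<noteq> 0" using regular gr_def by simp

lemma G_unit: "x \<in> M \<Longrightarrow> norm (G x) = 1"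
  using gr_M_nz by (simp add: G_eq)

lemma gr_G: "x \<in> M \<Longrightarrow> gr x = norm (gr x) *\<^sub>R G x"
  using gr_M_nz by (simp add: G_eq)

lemma max_in_M:
  assumes u: "norm u = 1" and x: "x \<in> K" and mx: "\<forall>y\<in>K. y \<bullet> u \<le> x \<bullet> u"
  shows "x \<in> M \<and> G x = u"
proof -
  have xM: "x \<in> M"
  proof (rule ccontr)
    assume "x \<notin> M"
    hence neg: "\<phi> x < 0" using x K_iff M_iff by fastforce
    obtain d where d: "d > 0" "\<And>y. dist y x < d \<Longrightarrow> dist (\<phi> y) (\<phi> x) < - \<phi> x"
      using phi_cont[of x] neg unfolding continuous_at_eps_delta by (meson neg_0_less_iff_less)
    have "dist (x + (d/2) *\<^sub>R u) x < d" using d(1) u by (simp add: dist_norm)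
    hence "\<phi> (x + (d/2) *\<^sub>R u) < 0" using d(2) by (simp add: dist_real_def abs_less_iff)
    hence "x + (d/2) *\<^sub>R u \<in> K" using K_iff by simp
    hence "(x + (d/2) *\<^sub>R u) \<bullet> u \<le> x \<bullet> u" using mx by blast
    moreover have "u \<bullet> u = 1" using u by (simp add: dot_square_norm)
    ultimately show False using d(1) by (simp add: inner_add_left)
  qed
  have "G x = u"
  proof (rule ccontr)
    assume ne: "G x \<noteq> u"
    have lt: "G x \<bullet> u < 1" using unit_inner_lt[OF G_unit[OF xM] u ne] .
    have gpos: "norm (gr x) > 0" using gr_M_nz[OF xM] by simp
    have "gr x \<bullet> (u - G x) = norm (gr x) * (G x \<bullet> u - 1)"
      using G_unit[OF xM] gr_G[OF xM]
      by (metis (no_types, lifting) dot_square_norm inner_commute inner_diff_right inner_scaleR_left power_one right_diff_distrib' mult.right_neutral)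
    also have "\<dots> < 0" using lt gpos by (simp add: mult_pos_neg)
    finally have neg: "gr x \<bullet> (u - G x) < 0" .
    have "((\<lambda>t. \<phi> (x + t *\<^sub>R (u - G x))) has_real_derivative (gr x \<bullet> (u - G x))) (at 0)"
      using path_deriv[of x "u - G x" 0] by simp
    from DERIV_neg_dec_right[OF this neg] obtain d where d: "d > 0"
      "\<And>h. h > 0 \<Longrightarrow> h < d \<Longrightarrow> \<phi> (x + 0 *\<^sub>R (u - G x)) > \<phi> (x + (0 + h) *\<^sub>R (u - G x))" by blast
    have "\<phi> (x + (d/2) *\<^sub>R (u - G x)) < \<phi> x" using d(2)[of "d/2"] d(1) by simp
    hence "x + (d/2) *\<^sub>R (u - G x) \<in> K" using xM M_iff K_iff by simp
    hence "(x + (d/2) *\<^sub>R (u - G x)) \<bullet> u \<le> x \<bullet> u" using mx by blast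
    hence "(d/2) * ((u - G x) \<bullet> u) \<le> 0" by (simp add: inner_add_left)
    moreover have "(u - G x) \<bullet> u = 1 - G x \<bullet> u" using u by (simp add: inner_diff_left dot_square_norm)
    ultimately show False using d(1) lt by (simp add: mult_le_0_iff)
  qed
  with xM show ?thesis by simp
qed

lemma K_ne: "K \<noteq> {}" using domain interior_subset by blast

lemma G_surj: assumes "norm u = 1" shows "\<exists>x\<in>M. G x = u"
proof -
  have "continuous_on K (\<lambda>y. y \<bullet> u)" by (intro continuous_intros)
  from continuous_attains_sup[OF compact K_ne this] obtain x where "x \<in> K" "\<forall>y\<in>K. y \<bullet> u \<le> x \<bullet> u" by blast
  thus ?thesis using max_in_M[OF assms] by blast
qed

lemma G_inj: assumes x: "x \<in> M" and y: "y \<in> M" and e: "G x = G y" shows "x = y"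
proof (rule ccontr)
  assume ne: "x \<noteq> y"
  define v where "v = y - x"
  have vnz: "v \<noteq> 0" using ne by (simp add: v_def)
  have s1: "gr x \<bullet> (y - x) \<le> 0" using support[OF x] y M_sub_K by blast
  have s2: "gr y \<bullet> (x - y) \<le> 0" using support[OF y] x M_sub_K by blast
  have p1: "norm (gr x) > 0" "norm (gr y) > 0" using gr_M_nz x y by auto
  have a1: "G x \<bullet> v \<le> 0" using s1 gr_G[OF x] p1 unfolding v_def
    by (metis inner_scaleR_left zero_less_mult_iff not_le)
  have a2: "G x \<bullet> v \<ge> 0" using s2 gr_G[OF y] p1 e unfolding v_def
    by (metis inner_scaleR_left zero_less_mult_iff not_le inner_minus_right minus_diff_eq neg_le_0_iff_le)
  have gv: "gr x \<bullet> v = 0" using a1 a2 gr_G[OF x] by (metis inner_scaleR_left mult_zero_right order_antisym)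
  have hpos: "d2 v x v > 0" using curvature x vnz gv hessian_eq gr_def by (metis inner_commute)
  have "((\<lambda>t. gr (x + t *\<^sub>R v) \<bullet> v) has_real_derivative (d2 v x v)) (at 0)"
    using path_deriv2[of x v 0] by simp
  from DERIV_pos_inc_right[OF this hpos] obtain d where d: "d > 0"
    "\<And>h. h > 0 \<Longrightarrow> h < d \<Longrightarrow> gr (x + 0 *\<^sub>R v) \<bullet> v < gr (x + (0 + h) *\<^sub>R v) \<bullet> v" by blast
  define h where "h = min (d/2) 1"
  have h: "h > 0" "h < d" "h \<le> 1" using d(1) by (auto simp: h_def)
  obtain z where z: "0 < z" "z < h"
    "\<phi> (x + h *\<^sub>R v) - \<phi> (x + 0 *\<^sub>R v) = (h - 0) * (gr (x + z *\<^sub>R v) \<bullet> v)"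
    using MVT2[of 0 h "\<lambda>t. \<phi> (x + t *\<^sub>R v)" "\<lambda>t. gr (x + t *\<^sub>R v) \<bullet> v"] path_deriv h(1) by blast
  have gz: "gr (x + z *\<^sub>R v) \<bullet> v > 0" using d(2)[of z] z h gv by simp
  have "\<phi> (x + h *\<^sub>R v) > \<phi> x" using z(3) mult_pos_pos[OF h(1) gz] by simp
  moreover have "x + h *\<^sub>R v \<in> K" using segment_in_K[of x y h] x y M_sub_K h v_def by auto
  ultimately show False using x M_iff K_iff by fastforce
qed

lemma G_inj_on: "inj_on G M" using G_inj by (auto intro: inj_onI)

lemma G_image: "G ` M = sphere 0 1"
proof
  show "G ` M \<subseteq> sphere 0 1" using G_unit by auto
  show "sphere 0 1 \<subseteq> G ` M"
  proof
    fix u :: 'a assume "u \<in> sphere 0 1"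
    hence "norm u = 1" by simp
    then obtain x where "x \<in> M" "G x = u" using G_surj by blast
    thus "u \<in> G ` M" by blast
  qed
qed

definition pu where "pu u = inv_into M G u"
definition p where "p z = pu (z /\<^sub>R norm z)"

lemma pu_props: assumes "norm u = 1" shows "pu u \<in> M" "G (pu u) = u"
proof -
  have "u \<in> G ` M" using G_image assms by simp
  thus "pu u \<in> M" "G (pu u) = u" unfolding pu_def by (auto intro: inv_into_into f_inv_into_f)
qed

lemma pu_G: "x \<in> M \<Longrightarrow> pu (G x) = x"
  unfolding pu_def using G_inj_on by (simp add: inv_into_f_f)

lemma p_props: assumes "z \<noteq> 0" shows "p z \<in> M" "G (p z) = z /\<^sub>R norm z"
  using pu_props[of "z /\<^sub>R norm z"] assms by (auto simp: p_def)

lemma p_max: assumes "z \<noteq> 0" "y \<in> K" shows "y \<bullet> z \<le> p z \<bullet> z"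
proof -
  have s: "gr (p z) \<bullet> (y - p z) \<le> 0" using support[OF p_props(1)[OF assms(1)] assms(2)] .
  have "gr (p z) = (norm (gr (p z)) / norm z) *\<^sub>R z"
    using gr_G[OF p_props(1)[OF assms(1)]] p_props(2)[OF assms(1)] by (simp add: divide_inverse)
  moreover have "norm (gr (p z)) / norm z > 0" using gr_M_nz[OF p_props(1)[OF assms(1)]] assms(1) by simp
  ultimately have "z \<bullet> (y - p z) \<le> 0" using s
    by (metis inner_scaleR_left inner_commute zero_less_mult_iff not_le)
  thus ?thesis by (simp add: inner_diff_right inner_commute)
qed

lemma G_cont: "continuous_on M G"
proof -
  have "continuous_on M gr" using gr_cont by (simp add: continuous_at_imp_continuous_on)
  thus ?thesis unfolding G_eq[abs_def] using gr_M_nz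
    by (auto intro!: continuous_intros)
qed

lemma pu_cont: "continuous_on (sphere 0 1) pu"
  using continuous_on_inv[OF G_cont M_compact] pu_G G_image by metis

lemma p_cont: "continuous_on (- {0}) p"
proof -
  have "continuous_on (- {0}) (\<lambda>z. z /\<^sub>R norm z)" by (auto intro!: continuous_intros)
  moreover have "(\<lambda>z. z /\<^sub>R norm z) ` (- {0}) \<subseteq> sphere 0 1"
  proof
    fix y assume "y \<in> (\<lambda>z. z /\<^sub>R norm z) ` (- {0})"
    then obtain z where "z \<noteq> 0" "y = z /\<^sub>R norm z" by auto
    thus "y \<in> sphere 0 1" using norm_sgn[of z] by (simp add: sgn_div_norm)
  qed
  ultimately have "continuous_on (- {0}) (pu \<circ> (\<lambda>z. z /\<^sub>R norm z))"
    using continuous_on_compose continuous_on_subset pu_cont by blast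
  thus ?thesis unfolding p_def[abs_def] o_def .
qed

lemma p_cont_at: "z \<noteq> 0 \<Longrightarrow> continuous (at z) p"
  using p_cont by (simp add: continuous_on_eq_continuous_at open_Compl)

end


lemma nrm_deriv: fixes z :: "'a::euclidean_space" assumes "z \<noteq> 0"
  shows "((\<lambda>x. x /\<^sub>R norm x) has_derivative (\<lambda>v. v /\<^sub>R norm z - ((z \<bullet> v) / norm z ^ 3) *\<^sub>R z)) (at z)"
proof -
  have n: "(norm has_derivative (\<lambda>h. h \<bullet> sgn z)) (at z)" using has_derivative_norm[OF assms] .
  have i: "((\<lambda>x. inverse (norm x)) has_derivative (\<lambda>h. - (inverse (norm z) * (h \<bullet> sgn z) * inverse (norm z)))) (at z)"
    using has_derivative_compose[OF n has_derivative_inverse'[of "norm z" UNIV]] assms by simp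
  have "((\<lambda>x. inverse (norm x) *\<^sub>R x) has_derivative
      (\<lambda>h. inverse (norm z) *\<^sub>R h + (- (inverse (norm z) * (h \<bullet> sgn z) * inverse (norm z))) *\<^sub>R z)) (at z)"
    using has_derivative_scaleR[OF i has_derivative_ident] by simp
  moreover have "(\<lambda>h. inverse (norm z) *\<^sub>R h + (- (inverse (norm z) * (h \<bullet> sgn z) * inverse (norm z))) *\<^sub>R z)
      = (\<lambda>v. v /\<^sub>R norm z - ((z \<bullet> v) / norm z ^ 3) *\<^sub>R z)"
  proof
    fix v
    have "inverse (norm z) * (v \<bullet> sgn z) * inverse (norm z) = (z \<bullet> v) / norm z ^ 3"
      by (simp add: sgn_div_norm inner_commute divide_inverse power3_eq_cube)
    thus "inverse (norm z) *\<^sub>R v + (- (inverse (norm z) * (v \<bullet> sgn z) * inverse (norm z))) *\<^sub>R z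
      = v /\<^sub>R norm z - ((z \<bullet> v) / norm z ^ 3) *\<^sub>R z" by (simp add: divide_inverse)
  qed
  ultimately show ?thesis by (simp add: divide_inverse)
qed

lemma nrm_deriv_unit: fixes z :: "'a::euclidean_space" assumes "norm z = 1"
  shows "((\<lambda>x. x /\<^sub>R norm x) has_derivative (\<lambda>v. v - (z \<bullet> v) *\<^sub>R z)) (at z)"
proof -
  have "z \<noteq> 0" using assms by auto
  thus ?thesis using nrm_deriv[of z] assms by simp
qed

lemma sphere_grad_unique:
  assumes "sphere_grad f n m" "sphere_grad f n m'" shows "m = m'"
proof -
  have "(\<lambda>v. m \<bullet> v) = (\<lambda>v. m' \<bullet> v)"
    using assms unfolding sphere_grad_def by (metis has_derivative_unique)
  hence "m \<bullet> (m - m') = m' \<bullet> (m - m')" by metis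
  hence "(m - m') \<bullet> (m - m') = 0" by (simp add: inner_diff_left)
  thus ?thesis by simp
qed

context bil begin

definition Hf where "Hf z = p z \<bullet> z"

lemma G_gauss: "gauss_map \<phi> = G" by (simp add: G_def[abs_def])

lemma gen_eq: "gen_fun M (gauss_map \<phi>) x y = Hf (x - y)"
  unfolding gen_fun_def Hf_def p_def pu_def G_gauss by simp

lemma p_in_K: "z \<noteq> 0 \<Longrightarrow> p z \<in> K" using p_props(1) M_sub_K by blast

lemma Hf_deriv: assumes z0: "z0 \<noteq> 0" shows "(Hf has_derivative (\<lambda>v. p z0 \<bullet> v)) (at z0)"
  unfolding has_derivative_at_alt
proof (intro conjI allI impI)
  show "bounded_linear ((\<bullet>) (p z0))" by (rule bounded_linear_inner_right)
  fix e :: real assume e: "e > 0"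
  obtain d where d: "d > 0" "\<And>y. dist y z0 < d \<Longrightarrow> dist (p y) (p z0) < e"
    using p_cont_at[OF z0] e unfolding continuous_at_eps_delta by blast
  define d' where "d' = min d (norm z0)"
  have d': "d' > 0" using d(1) z0 by (simp add: d'_def)
  show "\<exists>d>0. \<forall>y. norm (y - z0) < d \<longrightarrow> norm (Hf y - Hf z0 - p z0 \<bullet> (y - z0)) \<le> e * norm (y - z0)"
  proof (intro exI[of _ d'] conjI allI impI d')
    fix y assume y: "norm (y - z0) < d'"
    have yz: "y \<noteq> 0" using y by (auto simp: d'_def)
    have eq: "Hf y - Hf z0 - p z0 \<bullet> (y - z0) = p y \<bullet> y - p z0 \<bullet> y"
      by (simp add: Hf_def inner_diff_right)
    have lo: "p z0 \<bullet> y \<le> p y \<bullet> y" using p_max[OF yz p_in_K[OF z0]] by (simp add: inner_commute)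
    have hi0: "p y \<bullet> z0 \<le> p z0 \<bullet> z0" using p_max[OF z0 p_in_K[OF yz]] by (simp add: inner_commute)
    have "p y \<bullet> y - p z0 \<bullet> y \<le> (p y - p z0) \<bullet> (y - z0)"
      using hi0 by (simp add: inner_diff_left inner_diff_right)
    also have "\<dots> \<le> norm (p y - p z0) * norm (y - z0)" using norm_cauchy_schwarz by blast
    also have "\<dots> \<le> e * norm (y - z0)"
      using d(2)[of y] y by (intro mult_right_mono) (auto simp: dist_norm d'_def)
    finally show "norm (Hf y - Hf z0 - p z0 \<bullet> (y - z0)) \<le> e * norm (y - z0)"
      using eq lo by simp
  qed
qed

lemma sg1: assumes a: "norm a = 1" and b: "norm b = 1" and ab: "a \<noteq> b"
  shows "sphere_grad (\<lambda>x. gen_fun M (gauss_map \<phi>) x b) a (p (a - b) - (p (a - b) \<bullet> a) *\<^sub>R a)"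
  unfolding sphere_grad_def gen_eq
proof
  let ?P = "p (a - b)"
  show "(?P - (?P \<bullet> a) *\<^sub>R a) \<bullet> a = 0" using a by (simp add: inner_diff_left dot_square_norm)
  have d1: "((\<lambda>x. x /\<^sub>R norm x - b) has_derivative (\<lambda>v. v - (a \<bullet> v) *\<^sub>R a)) (at a)"
    using has_derivative_diff[OF nrm_deriv_unit[OF a] has_derivative_const[of b]] by simp
  have "a /\<^sub>R norm a - b \<noteq> 0" using a ab by simp
  from has_derivative_compose[OF d1 Hf_deriv[OF this]]
  have "((\<lambda>x. Hf (x /\<^sub>R norm x - b)) has_derivative (\<lambda>v. ?P \<bullet> (v - (a \<bullet> v) *\<^sub>R a))) (at a)"
    using a by simp
  moreover have "(\<lambda>v. ?P \<bullet> (v - (a \<bullet> v) *\<^sub>R a)) = (\<lambda>v. (?P - (?P \<bullet> a) *\<^sub>R a) \<bullet> v)"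
    by (simp add: fun_eq_iff inner_diff_left inner_diff_right inner_commute)
  ultimately show "((\<lambda>x. Hf (x /\<^sub>R norm x - b)) has_derivative (\<lambda>v. (?P - (?P \<bullet> a) *\<^sub>R a) \<bullet> v)) (at a)"
    by simp
qed

lemma sg2: assumes a: "norm a = 1" and b: "norm b = 1" and ab: "a \<noteq> b"
  shows "sphere_grad (\<lambda>y. gen_fun M (gauss_map \<phi>) a y) b (- (p (a - b) - (p (a - b) \<bullet> b) *\<^sub>R b))"
  unfolding sphere_grad_def gen_eq
proof
  let ?P = "p (a - b)"
  show "(- (?P - (?P \<bullet> b) *\<^sub>R b)) \<bullet> b = 0" using b by (simp add: inner_diff_left dot_square_norm)
  have d1: "((\<lambda>y. a - y /\<^sub>R norm y) has_derivative (\<lambda>v. - (v - (b \<bullet> v) *\<^sub>R b))) (at b)"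
    using has_derivative_diff[OF has_derivative_const[of a] nrm_deriv_unit[OF b]] by simp
  have "a - b /\<^sub>R norm b \<noteq> 0" using b ab by simp
  from has_derivative_compose[OF d1 Hf_deriv[OF this]]
  have "((\<lambda>y. Hf (a - y /\<^sub>R norm y)) has_derivative (\<lambda>v. ?P \<bullet> (- (v - (b \<bullet> v) *\<^sub>R b)))) (at b)"
    using b by simp
  moreover have "(\<lambda>v. ?P \<bullet> (- (v - (b \<bullet> v) *\<^sub>R b))) = (\<lambda>v. (- (?P - (?P \<bullet> b) *\<^sub>R b)) \<bullet> v)"
    by (simp add: fun_eq_iff inner_diff_left inner_diff_right inner_commute)
  ultimately show "((\<lambda>y. Hf (a - y /\<^sub>R norm y)) has_derivative (\<lambda>v. (- (?P - (?P \<bullet> b) *\<^sub>R b)) \<bullet> v)) (at b)"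
    by simp
qed

end


lemma refl_alg: fixes n1 n2 :: "'a::euclidean_space"
  assumes a: "norm n1 = 1" and b: "norm n2 = 1" and ab: "n1 \<noteq> n2"
  shows "n1 \<bullet> (n1 - n2) > 0" "norm (n1 - n2) ^ 2 = 2 * (n1 \<bullet> (n1 - n2))"
    "n2 \<bullet> (n1 - n2) < 0"
    "n1 - (2 * (n1 \<bullet> ((n1 - n2) /\<^sub>R norm (n1 - n2)))) *\<^sub>R ((n1 - n2) /\<^sub>R norm (n1 - n2)) = n2"
proof -
  have lt: "n1 \<bullet> n2 < 1" using unit_inner_lt[OF a b ab] .
  have s1: "n1 \<bullet> n1 = 1" "n2 \<bullet> n2 = 1" using a b by (simp_all add: dot_square_norm)
  show g: "n1 \<bullet> (n1 - n2) > 0" using lt s1 by (simp add: inner_diff_right)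
  show sq: "norm (n1 - n2) ^ 2 = 2 * (n1 \<bullet> (n1 - n2))"
    using s1 by (simp add: power2_norm_eq_inner inner_diff_left inner_diff_right inner_commute)
  show "n2 \<bullet> (n1 - n2) < 0" using lt s1 by (simp add: inner_diff_right inner_commute)
  define D where "D = n1 - n2"
  have Dnz: "norm D > 0" using ab by (simp add: D_def)
  have "(2 * (n1 \<bullet> (D /\<^sub>R norm D))) *\<^sub>R (D /\<^sub>R norm D) = ((2 * (n1 \<bullet> D)) / (norm D ^ 2)) *\<^sub>R D"
    by (simp add: power2_eq_square divide_inverse mult.assoc)
  also have "(2 * (n1 \<bullet> D)) / (norm D ^ 2) = 1" using sq g Dnz unfolding D_def[symmetric] by simp
  finally show "n1 - (2 * (n1 \<bullet> ((n1 - n2) /\<^sub>R norm (n1 - n2)))) *\<^sub>R ((n1 - n2) /\<^sub>R norm (n1 - n2)) = n2"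
    unfolding D_def by simp
qed

context bil begin

lemma rhs_iff: assumes a: "norm n1 = 1" and b: "norm n2 = 1" and ab: "n1 \<noteq> n2"
  shows "(sphere_grad (\<lambda>x. gen_fun M (gauss_map \<phi>) x n2) n1 m1 \<and> sphere_grad (\<lambda>y. gen_fun M (gauss_map \<phi>) n1 y) n2 (- m2))
    \<longleftrightarrow> (m1 = p (n1 - n2) - (p (n1 - n2) \<bullet> n1) *\<^sub>R n1 \<and> m2 = p (n1 - n2) - (p (n1 - n2) \<bullet> n2) *\<^sub>R n2)"
proof
  assume h: "sphere_grad (\<lambda>x. gen_fun M (gauss_map \<phi>) x n2) n1 m1 \<and> sphere_grad (\<lambda>y. gen_fun M (gauss_map \<phi>) n1 y) n2 (- m2)"
  have "m1 = p (n1 - n2) - (p (n1 - n2) \<bullet> n1) *\<^sub>R n1" using sphere_grad_unique h sg1[OF a b ab] by blast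
  moreover have "- m2 = - (p (n1 - n2) - (p (n1 - n2) \<bullet> n2) *\<^sub>R n2)" using sphere_grad_unique h sg2[OF a b ab] by blast
  hence "m2 = p (n1 - n2) - (p (n1 - n2) \<bullet> n2) *\<^sub>R n2" by (rule iffD1[OF neg_equal_iff_equal])
  ultimately show "m1 = p (n1 - n2) - (p (n1 - n2) \<bullet> n1) *\<^sub>R n1 \<and> m2 = p (n1 - n2) - (p (n1 - n2) \<bullet> n2) *\<^sub>R n2"
    by simp
next
  assume "m1 = p (n1 - n2) - (p (n1 - n2) \<bullet> n1) *\<^sub>R n1 \<and> m2 = p (n1 - n2) - (p (n1 - n2) \<bullet> n2) *\<^sub>R n2"
  thus "sphere_grad (\<lambda>x. gen_fun M (gauss_map \<phi>) x n2) n1 m1 \<and> sphere_grad (\<lambda>y. gen_fun M (gauss_map \<phi>) n1 y) n2 (- m2)"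
    using sg1[OF a b ab] sg2[OF a b ab] by simp
qed

lemma bill_iff: assumes a: "norm n1 = 1" and b: "norm n2 = 1" and ab: "n1 \<noteq> n2"
  and o1: "m1 \<bullet> n1 = 0" and o2: "m2 \<bullet> n2 = 0"
  shows "billiard_step K M (gauss_map \<phi>) (m1, n1) (m2, n2) \<longleftrightarrow>
    (m1 = p (n1 - n2) - (p (n1 - n2) \<bullet> n1) *\<^sub>R n1 \<and> m2 = p (n1 - n2) - (p (n1 - n2) \<bullet> n2) *\<^sub>R n2)"
proof -
  define D where "D = n1 - n2"
  have Dnz: "D \<noteq> 0" using ab by (simp add: D_def)
  note alg = refl_alg[OF a b ab, folded D_def]
  have n11: "n1 \<bullet> n1 = 1" using a by (simp add: dot_square_norm)
  show ?thesis unfolding billiard_step_def G_gauss D_def[symmetric] Let_def split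
  proof
    assume "\<exists>t. m1 + t *\<^sub>R n1 \<in> M \<and> (\<forall>s>t. m1 + s *\<^sub>R n1 \<notin> K) \<and>
        n2 = n1 - (2 * (n1 \<bullet> G (m1 + t *\<^sub>R n1))) *\<^sub>R G (m1 + t *\<^sub>R n1) \<and>
        m2 = m1 + t *\<^sub>R n1 - ((m1 + t *\<^sub>R n1) \<bullet> n2) *\<^sub>R n2"
    then obtain t where qM: "m1 + t *\<^sub>R n1 \<in> M" and ex: "\<forall>s>t. m1 + s *\<^sub>R n1 \<notin> K"
      and r: "n2 = n1 - (2 * (n1 \<bullet> G (m1 + t *\<^sub>R n1))) *\<^sub>R G (m1 + t *\<^sub>R n1)"
      and m2e: "m2 = m1 + t *\<^sub>R n1 - ((m1 + t *\<^sub>R n1) \<bullet> n2) *\<^sub>R n2" by blast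
    define q where "q = m1 + t *\<^sub>R n1"
    define N where "N = G q"
    have qM': "q \<in> M" using qM q_def by simp
    have Nu: "norm N = 1" using G_unit[OF qM'] N_def by simp
    have r': "n2 = n1 - (2 * (n1 \<bullet> N)) *\<^sub>R N" using r q_def N_def by simp
    have cpos: "n1 \<bullet> N > 0"
    proof (rule ccontr)
      assume "\<not> ?thesis"
      hence "n1 \<bullet> N < 0 \<or> n1 \<bullet> N = 0" by linarith
      thus False
      proof
        assume "n1 \<bullet> N = 0" thus False using r' ab by simp
      next
        assume neg: "n1 \<bullet> N < 0"
        have "gr q \<bullet> n1 = norm (gr q) * (n1 \<bullet> N)"
          using gr_G[OF qM'] N_def by (metis inner_scaleR_left inner_commute)
        also have "\<dots> < 0" using neg gr_M_nz[OF qM'] by (simp add: mult_pos_neg)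
        finally have gneg: "gr q \<bullet> n1 < 0" .
        have "((\<lambda>s. \<phi> (q + s *\<^sub>R n1)) has_real_derivative (gr q \<bullet> n1)) (at 0)"
          using path_deriv[of q n1 0] by simp
        from DERIV_neg_dec_right[OF this gneg] obtain d where d: "d > 0"
          "\<And>h. h > 0 \<Longrightarrow> h < d \<Longrightarrow> \<phi> (q + 0 *\<^sub>R n1) > \<phi> (q + (0 + h) *\<^sub>R n1)" by blast
        have "\<phi> (q + (d/2) *\<^sub>R n1) < \<phi> q" using d(2)[of "d/2"] d(1) by simp
        hence "q + (d/2) *\<^sub>R n1 \<in> K" using qM' M_iff K_iff by simp
        moreover have "q + (d/2) *\<^sub>R n1 = m1 + (t + d/2) *\<^sub>R n1" by (simp add: q_def algebra_simps)
        ultimately show False using ex d(1) by (metis less_add_same_cancel1 half_gt_zero)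
      qed
    qed
    have DN: "D = (2 * (n1 \<bullet> N)) *\<^sub>R N" using r' unfolding D_def by simp
    have nD: "norm D = 2 * (n1 \<bullet> N)" using DN Nu cpos by simp
    have "D /\<^sub>R norm D = N" using DN nD cpos by simp
    hence pD: "p D = q" unfolding p_def using pu_G[OF qM'] N_def by simp
    have tq: "q \<bullet> n1 = t" using o1 n11 by (simp add: q_def inner_add_left)
    show "m1 = p D - (p D \<bullet> n1) *\<^sub>R n1 \<and> m2 = p D - (p D \<bullet> n2) *\<^sub>R n2"
      using pD tq m2e q_def by simp
  next
    assume h: "m1 = p D - (p D \<bullet> n1) *\<^sub>R n1 \<and> m2 = p D - (p D \<bullet> n2) *\<^sub>R n2"
    define t where "t = p D \<bullet> n1"
    have q: "m1 + t *\<^sub>R n1 = p D" using h by (simp add: t_def)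
    show "\<exists>t. m1 + t *\<^sub>R n1 \<in> M \<and> (\<forall>s>t. m1 + s *\<^sub>R n1 \<notin> K) \<and>
        n2 = n1 - (2 * (n1 \<bullet> G (m1 + t *\<^sub>R n1))) *\<^sub>R G (m1 + t *\<^sub>R n1) \<and>
        m2 = m1 + t *\<^sub>R n1 - ((m1 + t *\<^sub>R n1) \<bullet> n2) *\<^sub>R n2"
    proof (intro exI[of _ t] conjI allI impI)
      show "m1 + t *\<^sub>R n1 \<in> M" using q p_props(1)[OF Dnz] by simp
      show "n2 = n1 - (2 * (n1 \<bullet> G (m1 + t *\<^sub>R n1))) *\<^sub>R G (m1 + t *\<^sub>R n1)"
        using q p_props(2)[OF Dnz] alg(4) by simp
      show "m2 = m1 + t *\<^sub>R n1 - ((m1 + t *\<^sub>R n1) \<bullet> n2) *\<^sub>R n2" unfolding q using h by simp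
      fix s assume st: "t < s"
      show "m1 + s *\<^sub>R n1 \<notin> K"
      proof
        assume "m1 + s *\<^sub>R n1 \<in> K"
        hence le: "(m1 + s *\<^sub>R n1) \<bullet> D \<le> p D \<bullet> D" using p_max[OF Dnz] by blast
        have "m1 + s *\<^sub>R n1 = p D + (s - t) *\<^sub>R n1" using q by (simp add: algebra_simps)
        hence "(s - t) * (n1 \<bullet> D) \<le> 0" using le by (simp add: inner_add_left)
        thus False using st alg(1) by (simp add: mult_le_0_iff)
      qed
    qed
  qed
qed

lemma part1: "\<forall>n1\<in>sphere 0 1. \<forall>n2\<in>sphere 0 1. \<forall>m1 m2. n1 \<noteq> n2 \<and> inner m1 n1 = 0 \<and> inner m2 n2 = 0 \<longrightarrow>
            (billiard_step K M (gauss_map \<phi>) (m1, n1) (m2, n2) \<longleftrightarrow>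
               sphere_grad (\<lambda>x. gen_fun M (gauss_map \<phi>) x n2) n1 m1 \<and> sphere_grad (\<lambda>y. gen_fun M (gauss_map \<phi>) n1 y) n2 (- m2))"
proof (intro ballI allI impI)
  fix n1 n2 m1 m2 :: 'a
  assume "n1 \<in> sphere 0 1" "n2 \<in> sphere 0 1" and h: "n1 \<noteq> n2 \<and> inner m1 n1 = 0 \<and> inner m2 n2 = 0"
  hence a: "norm n1 = 1" and b: "norm n2 = 1" by auto
  show "billiard_step K M (gauss_map \<phi>) (m1, n1) (m2, n2) \<longleftrightarrow>
               sphere_grad (\<lambda>x. gen_fun M (gauss_map \<phi>) x n2) n1 m1 \<and> sphere_grad (\<lambda>y. gen_fun M (gauss_map \<phi>) n1 y) n2 (- m2)"
    using bill_iff[OF a b] rhs_iff[OF a b] h by simp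
qed

end


context bil begin

definition U where "U = {x. gr x \<noteq> 0}"
definition ff where "ff x = ((1 + \<phi> x) / norm (gr x)) *\<^sub>R gr x"
definition fd where "fd x w = ((gr x \<bullet> w) / norm (gr x) - (1 + \<phi> x) * ((gr x \<bullet> Hm x w) / norm (gr x) ^ 3)) *\<^sub>R gr x
   + ((1 + \<phi> x) / norm (gr x)) *\<^sub>R Hm x w"

lemma aux1: "(n::real) > 0 \<Longrightarrow> (a / n - b / n ^ 3) * n ^ 2 + b / n = a * n"
  by (simp add: field_simps power2_eq_square power3_eq_cube)

lemma aux2: "(n::real) > 0 \<Longrightarrow> n * (a / n ^ 3) = a / n ^ 2"
  by (simp add: field_simps power2_eq_square power3_eq_cube)

lemma U_open: "open U"
proof -
  have "open (gr -` (- {0}))" using gr_cont by (intro continuous_open_vimage) auto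
  moreover have "gr -` (- {0}) = U" by (auto simp: U_def)
  ultimately show ?thesis by simp
qed

lemma M_sub_U: "M \<subseteq> U" using gr_M_nz by (auto simp: U_def)

lemma ngr_deriv: assumes "x \<in> U"
  shows "((\<lambda>y. norm (gr y)) has_derivative (\<lambda>w. (gr x \<bullet> Hm x w) / norm (gr x))) (at x)"
proof -
  have nz: "gr x \<noteq> 0" using assms by (simp add: U_def)
  from has_derivative_compose[OF gr_deriv has_derivative_norm[OF nz]]
  have "((\<lambda>y. norm (gr y)) has_derivative (\<lambda>w. Hm x w \<bullet> sgn (gr x))) (at x)" by simp
  moreover have "(\<lambda>w. Hm x w \<bullet> sgn (gr x)) = (\<lambda>w. (gr x \<bullet> Hm x w) / norm (gr x))"
    by (simp add: fun_eq_iff sgn_div_norm inner_commute divide_inverse)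
  ultimately show ?thesis by simp
qed

lemma ff_deriv: assumes "x \<in> U" shows "(ff has_derivative fd x) (at x)"
proof -
  have nz: "norm (gr x) \<noteq> 0" using assms by (simp add: U_def)
  have f1: "((\<lambda>y. 1 + \<phi> y) has_derivative (\<lambda>w. gr x \<bullet> w)) (at x)"
    using has_derivative_add[OF has_derivative_const[of 1] phi_deriv[of x]] by simp
  have q: "((\<lambda>y. (1 + \<phi> y) / norm (gr y)) has_derivative
     (\<lambda>h. - (1 + \<phi> x) * (inverse (norm (gr x)) * ((gr x \<bullet> Hm x h) / norm (gr x)) * inverse (norm (gr x))) + (gr x \<bullet> h) / norm (gr x))) (at x)"
    using has_derivative_divide[OF f1 ngr_deriv[OF assms] nz] .
  have "(ff has_derivative (\<lambda>h. ((1 + \<phi> x) / norm (gr x)) *\<^sub>R Hm x h +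
     (- (1 + \<phi> x) * (inverse (norm (gr x)) * ((gr x \<bullet> Hm x h) / norm (gr x)) * inverse (norm (gr x))) + (gr x \<bullet> h) / norm (gr x)) *\<^sub>R gr x)) (at x)"
    unfolding ff_def[abs_def] using has_derivative_scaleR[OF q gr_deriv] .
  moreover have "(\<lambda>h. ((1 + \<phi> x) / norm (gr x)) *\<^sub>R Hm x h +
     (- (1 + \<phi> x) * (inverse (norm (gr x)) * ((gr x \<bullet> Hm x h) / norm (gr x)) * inverse (norm (gr x))) + (gr x \<bullet> h) / norm (gr x)) *\<^sub>R gr x) = fd x"
  proof
    fix h
    have "- (1 + \<phi> x) * (inverse (norm (gr x)) * ((gr x \<bullet> Hm x h) / norm (gr x)) * inverse (norm (gr x))) + (gr x \<bullet> h) / norm (gr x)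
      = (gr x \<bullet> h) / norm (gr x) - (1 + \<phi> x) * ((gr x \<bullet> Hm x h) / norm (gr x) ^ 3)"
      by (simp add: divide_inverse power3_eq_cube algebra_simps)
    thus "((1 + \<phi> x) / norm (gr x)) *\<^sub>R Hm x h +
     (- (1 + \<phi> x) * (inverse (norm (gr x)) * ((gr x \<bullet> Hm x h) / norm (gr x)) * inverse (norm (gr x))) + (gr x \<bullet> h) / norm (gr x)) *\<^sub>R gr x = fd x h"
      unfolding fd_def by simp
  qed
  ultimately show ?thesis by simp
qed

lemma fd_bl: "x \<in> U \<Longrightarrow> bounded_linear (fd x)"
  using ff_deriv has_derivative_bounded_linear by blast

lemma fd_cont: "continuous_on U (\<lambda>x. Blinfun (fd x))"
proof (rule continuous_on_blinfun_componentwise)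
  fix i :: 'a
  have c1: "continuous_on U gr" using gr_cont by (simp add: continuous_at_imp_continuous_on)
  have c2: "continuous_on U \<phi>" by (rule phi_cont_on)
  have c3: "continuous_on U (\<lambda>x. Hm x i)" using Hm_cont by (simp add: continuous_at_imp_continuous_on)
  have "continuous_on U (\<lambda>x. fd x i)" unfolding fd_def
    using c1 c2 c3 by (intro continuous_intros) (auto simp: U_def)
  moreover have "\<And>x. x \<in> U \<Longrightarrow> fd x i = blinfun_apply (Blinfun (fd x)) i"
    using fd_bl by (simp add: bounded_linear_Blinfun_apply)
  ultimately show "continuous_on U (\<lambda>x. blinfun_apply (Blinfun (fd x)) i)"
    by (rule continuous_on_eq) simp
qed

lemma ff_M: "x \<in> M \<Longrightarrow> ff x = G x"
  by (simp add: ff_def G_eq M_iff divide_inverse)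

lemma fd_inj: assumes x: "x \<in> M" shows "inj (fd x)"
proof -
  have lin: "linear (fd x)" using fd_bl[of x] x M_sub_U bounded_linear.linear by blast
  have ph: "\<phi> x = 0" using x M_iff by simp
  have ng: "norm (gr x) > 0" using gr_M_nz[OF x] by simp
  have gg: "gr x \<bullet> gr x = norm (gr x) ^ 2" by (simp add: power2_norm_eq_inner)
  show ?thesis
  proof (rule linear_injective_0[OF lin, THEN iffD2], intro allI impI)
    fix w assume fw: "fd x w = 0"
    define c where "c = (gr x \<bullet> w) / norm (gr x) - (gr x \<bullet> Hm x w) / norm (gr x) ^ 3"
    have fdw: "fd x w = c *\<^sub>R gr x + (1 / norm (gr x)) *\<^sub>R Hm x w"
      unfolding fd_def c_def ph by (simp only: add_0_right mult_1_left)
    have "0 = fd x w \<bullet> gr x" using fw by simp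
    also have "\<dots> = c * (gr x \<bullet> gr x) + (1 / norm (gr x)) * (Hm x w \<bullet> gr x)"
      unfolding fdw by (simp only: inner_add_left inner_scaleR_left)
    also have "\<dots> = c * norm (gr x) ^ 2 + (gr x \<bullet> Hm x w) / norm (gr x)"
      by (simp add: gg inner_commute)
    also have "\<dots> = (gr x \<bullet> w) * norm (gr x)"
      unfolding c_def by (rule aux1[OF ng])
    finally have gw: "gr x \<bullet> w = 0" using ng by simp
    have "0 = fd x w \<bullet> w" using fw by simp
    also have "\<dots> = c * (gr x \<bullet> w) + (1 / norm (gr x)) * (Hm x w \<bullet> w)"
      unfolding fdw by (simp only: inner_add_left inner_scaleR_left)
    also have "\<dots> = d2 w x w / norm (gr x)" using gw Hm_inner by simp
    finally have d0: "d2 w x w = 0" using ng by simp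
    show "w = 0"
    proof (rule ccontr)
      assume wn: "w \<noteq> 0"
      have "inner w (gradient \<phi> x) = 0" using gw by (simp add: gr_def inner_commute)
      hence "hessian \<phi> x w w > 0" using curvature x wn by blast
      thus False using d0 hessian_eq by simp
    qed
  qed
qed

lemma p_deriv: assumes z0: "z0 \<noteq> 0" shows "\<exists>A. (p has_derivative A) (at z0)"
proof -
  define x0 where "x0 = p z0"
  have x0M: "x0 \<in> M" using p_props(1)[OF z0] x0_def by simp
  have x0U: "x0 \<in> U" using x0M M_sub_U by blast
  have lin: "linear (fd x0)" using fd_bl[OF x0U] bounded_linear.linear by blast
  obtain g where g: "linear g" "g \<circ> fd x0 = id"
    using linear_injective_left_inverse[OF lin fd_inj[OF x0M]] by blast
  have gbl: "bounded_linear g" using g(1) linear_conv_bounded_linear by blast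
  have inv: "Blinfun g o\<^sub>L Blinfun (fd x0) = id_blinfun"
  proof (rule blinfun_eqI)
    fix i
    show "blinfun_apply (Blinfun g o\<^sub>L Blinfun (fd x0)) i = blinfun_apply id_blinfun i"
      using g(2) gbl fd_bl[OF x0U] by (simp add: bounded_linear_Blinfun_apply fun_eq_iff)
  qed
  have derf: "\<And>x. x \<in> U \<Longrightarrow> (ff has_derivative blinfun_apply (Blinfun (fd x))) (at x)"
    using ff_deriv fd_bl by (simp add: bounded_linear_Blinfun_apply)
  show ?thesis
  proof (rule inverse_function_theorem[OF U_open derf fd_cont x0U inv])
  fix U' V gi gi'
  assume UV: "open U'" "U' \<subseteq> U" "x0 \<in> U'" "open V" "ff x0 \<in> V"
     "homeomorphism U' V ff gi" "\<And>y. y \<in> V \<Longrightarrow> (gi has_derivative (gi' y)) (at y)"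
     "\<And>y. y \<in> V \<Longrightarrow> gi' y = inv (blinfun_apply (Blinfun (fd (gi y))))"
     "\<And>y. y \<in> V \<Longrightarrow> bij (blinfun_apply (Blinfun (fd (gi y))))"
  define W where "W = (- {0}) \<inter> p -` U'"
  have o: "open (- {0::'a})" by (rule open_Compl) simp
  have "open (p -` U' \<inter> - {0})" using p_cont UV(1) continuous_on_open_vimage[OF o, of p] by blast
  hence Wo: "open W" unfolding W_def by (simp add: Int_commute)
  have z0W: "z0 \<in> W" using z0 UV(3) x0_def by (simp add: W_def)
  have eqW: "\<And>z. z \<in> W \<Longrightarrow> gi (z /\<^sub>R norm z) = p z"
  proof -
    fix z assume "z \<in> W"
    hence zz: "z \<noteq> 0" "p z \<in> U'" by (auto simp: W_def)
    have "ff (p z) = z /\<^sub>R norm z" using ff_M p_props[OF zz(1)] by simp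
    moreover have "gi (ff (p z)) = p z" using UV(6) zz(2) unfolding homeomorphism_def by blast
    ultimately show "gi (z /\<^sub>R norm z) = p z" by simp
  qed
  have inV: "z0 /\<^sub>R norm z0 \<in> V"
  proof -
    have "ff x0 = z0 /\<^sub>R norm z0" using ff_M[OF x0M] p_props(2)[OF z0] x0_def by simp
    thus ?thesis using UV(5) by simp
  qed
  have "((\<lambda>z. gi (z /\<^sub>R norm z)) has_derivative (\<lambda>v. gi' (z0 /\<^sub>R norm z0) (v /\<^sub>R norm z0 - ((z0 \<bullet> v) / norm z0 ^ 3) *\<^sub>R z0))) (at z0)"
    using has_derivative_compose[OF nrm_deriv[OF z0] UV(7)[OF inV]] .
  hence "(p has_derivative (\<lambda>v. gi' (z0 /\<^sub>R norm z0) (v /\<^sub>R norm z0 - ((z0 \<bullet> v) / norm z0 ^ 3) *\<^sub>R z0))) (at z0)"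
    by (rule has_derivative_transform_within_open[OF _ Wo z0W eqW])
  thus ?thesis by blast
  qed
qed

lemma Dp_props: assumes z0: "z0 \<noteq> 0" and A: "(p has_derivative A) (at z0)"
  shows "z0 \<bullet> A u = 0" "A u = 0 \<Longrightarrow> u = ((z0 \<bullet> u) / (z0 \<bullet> z0)) *\<^sub>R z0"
proof -
  define x0 where "x0 = p z0"
  have x0M: "x0 \<in> M" using p_props(1)[OF z0] x0_def by simp
  have x0U: "x0 \<in> U" using x0M M_sub_U by blast
  have Alin: "linear A" using A has_derivative_linear by blast
  have o: "open (- {0::'a})" by (rule open_Compl) simp
  have z0o: "z0 \<in> - {0}" using z0 by simp
  have c1: "((\<lambda>z. \<phi> (p z)) has_derivative (\<lambda>v. gr x0 \<bullet> A v)) (at z0)"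
    using has_derivative_compose[OF A phi_deriv] x0_def by simp
  have c2: "((\<lambda>z. \<phi> (p z)) has_derivative (\<lambda>v. 0)) (at z0)"
    by (rule has_derivative_transform_within_open[OF has_derivative_const o z0o])
       (use p_props(1) M_iff in auto)
  have "(\<lambda>v. gr x0 \<bullet> A v) = (\<lambda>v. 0)" using has_derivative_unique[OF c1 c2] .
  hence ga: "gr x0 \<bullet> A u = 0" by metis
  have "gr x0 = (norm (gr x0) / norm z0) *\<^sub>R z0"
    using gr_G[OF x0M] p_props(2)[OF z0] x0_def by (simp add: divide_inverse)
  moreover have "norm (gr x0) / norm z0 \<noteq> 0" using gr_M_nz[OF x0M] z0 by simp
  ultimately show "z0 \<bullet> A u = 0" using ga by (metis inner_scaleR_left mult_eq_0_iff)
  have d1: "((\<lambda>z. ff (p z)) has_derivative (\<lambda>v. fd x0 (A v))) (at z0)"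
    using has_derivative_compose[OF A ff_deriv[OF x0U, unfolded x0_def]] x0_def by simp
  have d2: "((\<lambda>z. ff (p z)) has_derivative (\<lambda>v. v /\<^sub>R norm z0 - ((z0 \<bullet> v) / norm z0 ^ 3) *\<^sub>R z0)) (at z0)"
    by (rule has_derivative_transform_within_open[OF nrm_deriv[OF z0] o z0o])
       (use p_props ff_M in auto)
  have eq: "fd x0 (A u) = u /\<^sub>R norm z0 - ((z0 \<bullet> u) / norm z0 ^ 3) *\<^sub>R z0"
    using has_derivative_unique[OF d1 d2] by metis
  assume "A u = 0"
  moreover have "fd x0 0 = 0" using fd_bl[OF x0U] linear_0 bounded_linear.linear by blast
  ultimately have "u /\<^sub>R norm z0 = ((z0 \<bullet> u) / norm z0 ^ 3) *\<^sub>R z0" using eq by simp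
  hence "norm z0 *\<^sub>R (u /\<^sub>R norm z0) = norm z0 *\<^sub>R (((z0 \<bullet> u) / norm z0 ^ 3) *\<^sub>R z0)" by simp
  hence "u = (norm z0 * ((z0 \<bullet> u) / norm z0 ^ 3)) *\<^sub>R z0" using z0 by simp
  moreover have "norm z0 * ((z0 \<bullet> u) / norm z0 ^ 3) = (z0 \<bullet> u) / (z0 \<bullet> z0)"
    using aux2[of "norm z0" "z0 \<bullet> u"] z0 by (simp add: power2_norm_eq_inner)
  ultimately show "u = ((z0 \<bullet> u) / (z0 \<bullet> z0)) *\<^sub>R z0" by simp
qed

end


lemma bij_hyper: fixes L :: "'a::euclidean_space \<Rightarrow> 'a"
  assumes lin: "linear L" and a: "a \<noteq> 0" and b: "b \<noteq> 0"
    and into: "\<And>u. u \<bullet> a = 0 \<Longrightarrow> L u \<bullet> b = 0"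
    and ker: "\<And>u. u \<bullet> a = 0 \<Longrightarrow> L u = 0 \<Longrightarrow> u = 0"
  shows "bij_betw L {u. u \<bullet> a = 0} {w. w \<bullet> b = 0}"
proof -
  define S where "S = {u::'a. u \<bullet> a = 0}"
  define T where "T = {w::'a. w \<bullet> b = 0}"
  have sS: "subspace S" unfolding S_def by (rule subspace_hyperplane2)
  have sT: "subspace T" unfolding T_def by (rule subspace_hyperplane2)
  have inj: "inj_on L S"
  proof (rule inj_onI)
    fix x y assume x: "x \<in> S" and y: "y \<in> S" and e: "L x = L y"
    have "(x - y) \<bullet> a = 0" using x y by (simp add: S_def inner_diff_left)
    moreover have "L (x - y) = 0" using e lin by (simp add: linear_diff)
    ultimately have "x - y = 0" using ker by blast
    thus "x = y" by simp
  qed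
  have sub: "L ` S \<subseteq> T" using into by (auto simp: S_def T_def)
  have sLS: "subspace (L ` S)" using linear_subspace_image[OF lin sS] .
  have dS: "dim S = DIM('a) - 1"
  proof -
    have "S = {x. a \<bullet> x = 0}" by (auto simp: S_def inner_commute)
    thus ?thesis using dim_hyperplane[OF a] by simp
  qed
  have dT: "dim T = DIM('a) - 1"
  proof -
    have "T = {x. b \<bullet> x = 0}" by (auto simp: T_def inner_commute)
    thus ?thesis using dim_hyperplane[OF b] by simp
  qed
  have sp: "span S = S" using sS by simp
  have "inj_on L (span S)" using inj unfolding sp .
  hence "dim (L ` S) = dim S" using dim_image_eq[OF lin] by blast
  hence "L ` S = T" using subspace_dim_equal[OF sLS sT sub] dS dT by simp
  thus ?thesis using inj unfolding bij_betw_def S_def T_def by simp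
qed

context bil begin

lemma linQ: "linear (\<lambda>z::'a. - (z - (z \<bullet> c) *\<^sub>R c))"
  by (rule linearI) (simp_all add: inner_add_left algebra_simps)

lemma linR: "linear (\<lambda>z::'a. z - (z \<bullet> c) *\<^sub>R c)"
  by (rule linearI) (simp_all add: inner_add_left algebra_simps)

lemma linQ1: "linear (\<lambda>z::'a. - (z - (c \<bullet> z) *\<^sub>R c))"
  by (rule linearI) (simp_all add: inner_add_right algebra_simps)

lemma linR1: "linear (\<lambda>z::'a. z - (c \<bullet> z) *\<^sub>R c)"
  by (rule linearI) (simp_all add: inner_add_right algebra_simps)

lemma mixed1: assumes a: "norm n1 = 1" and b: "norm n2 = 1" and ab: "n1 \<noteq> n2"
  shows "mixed_D12_iso (gen_fun M (gauss_map \<phi>)) n1 n2"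
proof -
  define d where "d = n1 - n2"
  have dnz: "d \<noteq> 0" using ab by (simp add: d_def)
  obtain A where A: "(p has_derivative A) (at d)" using p_deriv[OF dnz] by blast
  have Alin: "linear A" using A has_derivative_linear by blast
  note alg = refl_alg[OF a b ab, folded d_def]
  define g where "g x = - (p (x - n2) - (p (x - n2) \<bullet> n2) *\<^sub>R n2)" for x
  define L where "L v = - (A (v - (n1 \<bullet> v) *\<^sub>R n1) - (A (v - (n1 \<bullet> v) *\<^sub>R n1) \<bullet> n2) *\<^sub>R n2)" for v
  have c1: "\<forall>x\<in>sphere 0 1. x \<noteq> n2 \<longrightarrow> sphere_grad (\<lambda>y. gen_fun M (gauss_map \<phi>) x y) n2 (g x)"
  proof (intro ballI impI)
    fix x :: 'a assume "x \<in> sphere 0 1" "x \<noteq> n2"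
    thus "sphere_grad (\<lambda>y. gen_fun M (gauss_map \<phi>) x y) n2 (g x)"
      using sg2[of x n2] b unfolding g_def by simp
  qed
  have c2: "((\<lambda>x. g (x /\<^sub>R norm x)) has_derivative L) (at n1)"
  proof -
    have d1: "((\<lambda>x. x /\<^sub>R norm x - n2) has_derivative (\<lambda>v. v - (n1 \<bullet> v) *\<^sub>R n1)) (at n1)"
      using has_derivative_diff[OF nrm_deriv_unit[OF a] has_derivative_const[of n2]] by simp
    have "n1 /\<^sub>R norm n1 - n2 = d" using a by (simp add: d_def)
    hence A': "(p has_derivative A) (at (n1 /\<^sub>R norm n1 - n2))" using A by simp
    have q: "((\<lambda>x. p (x /\<^sub>R norm x - n2)) has_derivative (\<lambda>v. A (v - (n1 \<bullet> v) *\<^sub>R n1))) (at n1)"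
      using has_derivative_compose[OF d1 A'] .
    have bl: "bounded_linear (\<lambda>z::'a. - (z - (z \<bullet> n2) *\<^sub>R n2))"
      using linQ linear_conv_bounded_linear by blast
    from bounded_linear.has_derivative[OF bl q]
    show "((\<lambda>x. g (x /\<^sub>R norm x)) has_derivative L) (at n1)"
      unfolding g_def L_def[abs_def] by simp
  qed
  have c3: "bij_betw L {u. u \<bullet> n1 = 0} {w. w \<bullet> n2 = 0}"
  proof -
    have linL: "linear L" unfolding L_def[abs_def]
      using linear_compose[OF linear_compose[OF linR1[of n1] Alin] linQ[of n2]] by (simp add: o_def)
    show "bij_betw L {u. u \<bullet> n1 = 0} {w. w \<bullet> n2 = 0}"
    proof (rule bij_hyper[OF linL])
      show "n1 \<noteq> 0" "n2 \<noteq> 0" using a b by auto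
      fix u assume u: "u \<bullet> n1 = 0"
      have w: "u - (n1 \<bullet> u) *\<^sub>R n1 = u" using u by (simp add: inner_commute)
      have n22: "n2 \<bullet> n2 = 1" using b by (simp add: dot_square_norm)
      show "L u \<bullet> n2 = 0" unfolding L_def w using n22 by (simp add: inner_diff_left)
      assume "L u = 0"
      hence e: "A u = (A u \<bullet> n2) *\<^sub>R n2" unfolding L_def w by simp
      have "d \<bullet> A u = 0" using Dp_props(1)[OF dnz A] .
      hence "(A u \<bullet> n2) * (n2 \<bullet> d) = 0" using e by (metis inner_commute inner_scaleR_left)
      hence "A u \<bullet> n2 = 0" using alg(3) by simp
      hence Au: "A u = 0" using e by simp
      have ud: "u = ((d \<bullet> u) / (d \<bullet> d)) *\<^sub>R d" using Dp_props(2)[OF dnz A Au] .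
      hence "u \<bullet> n1 = ((d \<bullet> u) / (d \<bullet> d)) * (n1 \<bullet> d)" by (metis inner_commute inner_scaleR_left)
      hence "(d \<bullet> u) / (d \<bullet> d) = 0" using u alg(1) by simp
      thus "u = 0" using ud dnz by auto
    qed
  qed
  show ?thesis unfolding mixed_D12_iso_def using c1 c2 c3 by blast
qed

lemma mixed2: assumes a: "norm n1 = 1" and b: "norm n2 = 1" and ab: "n1 \<noteq> n2"
  shows "mixed_D12_iso (\<lambda>y x. gen_fun M (gauss_map \<phi>) x y) n2 n1"
proof -
  define d where "d = n1 - n2"
  have dnz: "d \<noteq> 0" using ab by (simp add: d_def)
  obtain A where A: "(p has_derivative A) (at d)" using p_deriv[OF dnz] by blast
  have Alin: "linear A" using A has_derivative_linear by blast
  note alg = refl_alg[OF a b ab, folded d_def]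
  define g where "g x = p (n1 - x) - (p (n1 - x) \<bullet> n1) *\<^sub>R n1" for x
  define L where "L v = A (- (v - (n2 \<bullet> v) *\<^sub>R n2)) - (A (- (v - (n2 \<bullet> v) *\<^sub>R n2)) \<bullet> n1) *\<^sub>R n1" for v
  have c1: "\<forall>x\<in>sphere 0 1. x \<noteq> n1 \<longrightarrow> sphere_grad (\<lambda>y. gen_fun M (gauss_map \<phi>) y x) n1 (g x)"
  proof (intro ballI impI)
    fix x :: 'a assume "x \<in> sphere 0 1" "x \<noteq> n1"
    hence "norm x = 1" "n1 \<noteq> x" by auto
    thus "sphere_grad (\<lambda>y. gen_fun M (gauss_map \<phi>) y x) n1 (g x)"
      using sg1[of n1 x] a unfolding g_def by simp
  qed
  have c2: "((\<lambda>x. g (x /\<^sub>R norm x)) has_derivative L) (at n2)"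
  proof -
    have d1: "((\<lambda>y. n1 - y /\<^sub>R norm y) has_derivative (\<lambda>v. - (v - (n2 \<bullet> v) *\<^sub>R n2))) (at n2)"
      using has_derivative_diff[OF has_derivative_const[of n1] nrm_deriv_unit[OF b]] by simp
    have "n1 - n2 /\<^sub>R norm n2 = d" using b by (simp add: d_def)
    hence A': "(p has_derivative A) (at (n1 - n2 /\<^sub>R norm n2))" using A by simp
    have q: "((\<lambda>y. p (n1 - y /\<^sub>R norm y)) has_derivative (\<lambda>v. A (- (v - (n2 \<bullet> v) *\<^sub>R n2)))) (at n2)"
      using has_derivative_compose[OF d1 A'] .
    have bl: "bounded_linear (\<lambda>z::'a. z - (z \<bullet> n1) *\<^sub>R n1)"
      using linR linear_conv_bounded_linear by blast
    from bounded_linear.has_derivative[OF bl q]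
    show "((\<lambda>x. g (x /\<^sub>R norm x)) has_derivative L) (at n2)"
      unfolding g_def L_def[abs_def] by simp
  qed
  have c3: "bij_betw L {u. u \<bullet> n2 = 0} {w. w \<bullet> n1 = 0}"
  proof -
    have linL: "linear L" unfolding L_def[abs_def]
      using linear_compose[OF linear_compose[OF linQ1[of n2] Alin] linR[of n1]] by (simp add: o_def)
    show "bij_betw L {u. u \<bullet> n2 = 0} {w. w \<bullet> n1 = 0}"
    proof (rule bij_hyper[OF linL])
      show "n2 \<noteq> 0" "n1 \<noteq> 0" using a b by auto
      fix u assume u: "u \<bullet> n2 = 0"
      have w: "- (u - (n2 \<bullet> u) *\<^sub>R n2) = - u" using u by (simp add: inner_commute)
      have n11: "n1 \<bullet> n1 = 1" using a by (simp add: dot_square_norm)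
      show "L u \<bullet> n1 = 0" unfolding L_def w using n11 by (simp add: inner_diff_left)
      assume "L u = 0"
      hence e: "A (- u) = (A (- u) \<bullet> n1) *\<^sub>R n1" unfolding L_def w by simp
      have "d \<bullet> A (- u) = 0" using Dp_props(1)[OF dnz A] .
      hence "(A (- u) \<bullet> n1) * (n1 \<bullet> d) = 0" using e by (metis inner_commute inner_scaleR_left)
      hence "A (- u) \<bullet> n1 = 0" using alg(1) by simp
      hence Au: "A (- u) = 0" using e by simp
      have ud: "- u = ((d \<bullet> - u) / (d \<bullet> d)) *\<^sub>R d" using Dp_props(2)[OF dnz A Au] .
      hence "- u \<bullet> n2 = ((d \<bullet> - u) / (d \<bullet> d)) * (n2 \<bullet> d)" by (metis inner_commute inner_scaleR_left)
      hence "(d \<bullet> - u) / (d \<bullet> d) = 0" using u alg(3) by simp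
      hence "- u = 0" using ud dnz by auto
      thus "u = 0" by simp
    qed
  qed
  show ?thesis unfolding mixed_D12_iso_def using c1 c2 c3 by blast
qed

end

theorem theorem5p2:
  fixes \<phi> :: "'a::euclidean_space \<Rightarrow> real" and K M :: "'a set"
  assumes smooth: "smooth_on UNIV \<phi>"
    and K_def: "K = {x. \<phi> x \<le> 0}"
    and M_def: "M = {x. \<phi> x = 0}"
    and compact: "compact K" and convex: "convex K" and domain: "interior K \<noteq> {}"
    and regular: "\<forall>x\<in>M. gradient \<phi> x \<noteq> 0"
    and curvature: "\<forall>x\<in>M. \<forall>v. v \<noteq> 0 \<and> inner v (gradient \<phi> x) = 0 \<longrightarrow> hessian \<phi> x v v > 0"
  shows "(\<forall>n1\<in>sphere 0 1. \<forall>n2\<in>sphere 0 1. \<forall>m1 m2. n1 \<noteq> n2 \<and> inner m1 n1 = 0 \<and> inner m2 n2 = 0 \<longrightarrow>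
            (billiard_step K M (gauss_map \<phi>) (m1, n1) (m2, n2) \<longleftrightarrow>
               sphere_grad (\<lambda>x. gen_fun M (gauss_map \<phi>) x n2) n1 m1 \<and> sphere_grad (\<lambda>y. gen_fun M (gauss_map \<phi>) n1 y) n2 (- m2)))
       \<and> (\<forall>n1\<in>sphere 0 1. \<forall>n2\<in>sphere 0 1. n1 \<noteq> n2 \<longrightarrow>
            mixed_D12_iso (gen_fun M (gauss_map \<phi>)) n1 n2 \<and> mixed_D12_iso (\<lambda>y x. gen_fun M (gauss_map \<phi>) x y) n2 n1)"
proof -
  interpret bil \<phi> K M using assms by (unfold_locales) auto
  show ?thesis
  proof (intro conjI)
    show "\<forall>n1\<in>sphere 0 1. \<forall>n2\<in>sphere 0 1. \<forall>m1 m2. n1 \<noteq> n2 \<and> inner m1 n1 = 0 \<and> inner m2 n2 = 0 \<longrightarrow>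
            (billiard_step K M (gauss_map \<phi>) (m1, n1) (m2, n2) \<longleftrightarrow>
               sphere_grad (\<lambda>x. gen_fun M (gauss_map \<phi>) x n2) n1 m1 \<and> sphere_grad (\<lambda>y. gen_fun M (gauss_map \<phi>) n1 y) n2 (- m2))"
      by (rule part1)
    show "\<forall>n1\<in>sphere 0 1. \<forall>n2\<in>sphere 0 1. n1 \<noteq> n2 \<longrightarrow>
            mixed_D12_iso (gen_fun M (gauss_map \<phi>)) n1 n2 \<and> mixed_D12_iso (\<lambda>y x. gen_fun M (gauss_map \<phi>) x y) n2 n1"
      using mixed1 mixed2 by simp
  qed
qed


end
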